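(* Let $G$ be the group given by the presentation $$G=\langle\, a,s,t \mid a^2=1,\ [a,a^t]=1,\ [s,t]=1,\ a^s=aa^t \,\rangle,$$ and let $\mathcal A=\{a,s,t,at,ta,ata,as,sa,asa\}$. Then $G$ is finitely presented and has unbounded dead-end depth with respect to $\mathcal A$: for every $N\ge 1$ there is an element $g\in G$ whose depth with respect to $\mathcal A$ is at least $N$.
   Context: Notation: $[x,y]=x^{-1}y^{-1}xy$ and $x^y=y^{-1}xy$. For a finite generating set $\mathcal A$ of a group $G$, $d_{\mathcal A}$ denotes the word metric, i.e. the path metric on the Cayley graph of $(G,\mathcal A)$; here $d_{\mathcal A}(g,h)$ is the length of a shortest word in $\mathcal A\cup\mathcal A^{-1}$ representing $g^{-1}h$. The depth of $g\in G$ with respect to $\mathcal A$ is the distance, in $d_{\mathcal A}$, from $g$ to the complement in $G$ of the closed ball $\{h\in G: d_{\mathcal A}(1,h)\le d_{\mathcal A}(1,g)\}$. The group $G$ has unbounded dead-end depth with respect to $\mathcal A$ if the depths of its elements are not bounded above. *)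

theory Defs
  imports Main
begin

datatype gen = Ga | Gs | Gt

(* a letter is a generator together with an exponent sign: (x, False) = x, (x, True) = x^-1 *)
type_synonym letter = "gen \<times> bool"
type_synonym word = "letter list"

definition flip :: "letter \<Rightarrow> letter" where
  "flip l = (fst l, \<not> snd l)"

definition winv :: "word \<Rightarrow> word" where
  "winv w = rev (map flip w)"

abbreviation la :: word where "la \<equiv> [(Ga, False)]"
abbreviation ls :: word where "ls \<equiv> [(Gs, False)]"
abbreviation lt :: word where "lt \<equiv> [(Gt, False)]"

definition wconj :: "word \<Rightarrow> word \<Rightarrow> word" where
  "wconj x y = winv y @ x @ y"

definition wcomm :: "word \<Rightarrow> word \<Rightarrow> word" where
  "wcomm x y = winv x @ winv y @ x @ y"

(* relators (relations r = 1, resp. u = v rewritten as u v^-1 = 1) *)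
definition G_relators :: "word set" where
  "G_relators =
     { la @ la,
       wcomm la (wconj la lt),
       wcomm ls lt,
       wconj la ls @ winv (la @ wconj la lt) }"

inductive G_eq :: "word \<Rightarrow> word \<Rightarrow> bool" where
  G_refl: "G_eq u u"
| G_sym: "G_eq u v \<Longrightarrow> G_eq v u"
| G_trans: "G_eq u v \<Longrightarrow> G_eq v w \<Longrightarrow> G_eq u w"
| G_cancel: "G_eq (u @ [x, flip x] @ v) (u @ v)"
| G_rel: "r \<in> G_relators \<Longrightarrow> G_eq (u @ r @ v) (u @ v)"

(* elements of G are represented by words over {a,s,t}^{\<pm>1}; two words represent the
   same element iff G_eq holds *)

definition A_set :: "word set" where
  "A_set = { la, ls, lt, la @ lt, lt @ la, la @ lt @ la, la @ ls, ls @ la, la @ ls @ la }"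

definition A_sym :: "word set" where
  "A_sym = A_set \<union> winv ` A_set"

definition dA :: "word \<Rightarrow> word \<Rightarrow> nat" where
  "dA g h = Inf { length ws | ws. set ws \<subseteq> A_sym \<and> G_eq (concat ws) (winv g @ h) }"

definition normA :: "word \<Rightarrow> nat" where
  "normA g = dA [] g"

definition depthA :: "word \<Rightarrow> nat" where
  "depthA g = Inf { dA g h | h. normA g < normA h }"

end

theory Submission
  imports Defs "HOL-Library.Product_Plus"
begin


lemma flip_flip[simp]: "flip (flip x) = x" by (simp add: flip_def)
lemma winv_append[simp]: "winv (u @ v) = winv v @ winv u" by (simp add: winv_def)
lemma winv_Nil[simp]: "winv [] = []" by (simp add: winv_def)
lemma winv_Cons[simp]: "winv (x # u) = winv u @ [flip x]" by (simp add: winv_def)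

lemma G_ctx: "G_eq u v \<Longrightarrow> G_eq (x @ u @ y) (x @ v @ y)"
proof (induction rule: G_eq.induct)
  case (G_refl u) then show ?case by (rule G_eq.G_refl)
next
  case (G_sym u v) then show ?case by (metis G_eq.G_sym)
next
  case (G_trans u v w) then show ?case by (metis G_eq.G_trans)
next
  case (G_cancel u z v)
  have "G_eq ((x @ u) @ [z, flip z] @ (v @ y)) ((x @ u) @ (v @ y))" by (rule G_eq.G_cancel)
  then show ?case by simp
next
  case (G_rel r u v)
  have "G_eq ((x @ u) @ r @ (v @ y)) ((x @ u) @ (v @ y))" using G_rel by (rule G_eq.G_rel)
  then show ?case by simp
qed

lemma G_app: "G_eq u u' \<Longrightarrow> G_eq v v' \<Longrightarrow> G_eq (u @ v) (u' @ v')"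
proof -
  assume a: "G_eq u u'" and b: "G_eq v v'"
  have "G_eq ([] @ u @ v) ([] @ u' @ v)" using G_ctx[OF a] by blast
  moreover have "G_eq (u' @ v @ []) (u' @ v' @ [])" using G_ctx[OF b] by blast
  ultimately show ?thesis by (simp add: G_eq.G_trans)
qed

lemma G_inv_r: "G_eq (u @ winv u) []"
proof (induction u)
  case Nil then show ?case by (simp add: G_eq.G_refl)
next
  case (Cons x u)
  have "G_eq ([x] @ (u @ winv u) @ [flip x]) ([x] @ [] @ [flip x])"
    using G_ctx[OF Cons] by blast
  moreover have "G_eq ([] @ [x, flip x] @ []) ([] @ [])" by (rule G_eq.G_cancel)
  ultimately show ?case by (auto intro: G_eq.G_trans)
qed

lemma winv_winv[simp]: "winv (winv u) = u" by (induction u) auto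

lemma G_inv_l: "G_eq (winv u @ u) []"
  using G_inv_r[of "winv u"] by simp

lemma equivp_G: "equivp G_eq"
  by (rule equivpI) (auto simp: reflp_def symp_def transp_def intro: G_eq.intros)

quotient_type grp = word / G_eq by (rule equivp_G)

instantiation grp :: group_add
begin
lift_definition zero_grp :: grp is "[]" .
lift_definition plus_grp :: "grp \<Rightarrow> grp \<Rightarrow> grp" is "(@)" by (rule G_app)
lift_definition uminus_grp :: "grp \<Rightarrow> grp" is winv
proof -
  fix u v assume a: "G_eq u v"
  have "G_eq (winv u @ v @ winv v) (winv u @ u @ winv v)" using G_ctx[OF G_eq.G_sym[OF a]] by blast
  moreover have "G_eq (winv u @ v @ winv v) (winv u @ [])" using G_app[OF G_eq.G_refl G_inv_r] by blast
  moreover have "G_eq ((winv u @ u) @ winv v) ([] @ winv v)" using G_app[OF G_inv_l G_eq.G_refl] by blast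
  ultimately show "G_eq (winv u) (winv v)" by (auto intro: G_eq.intros)
qed
definition minus_grp :: "grp \<Rightarrow> grp \<Rightarrow> grp" where "minus_grp x y = plus x (uminus y)"
instance
proof
  fix a b c :: grp
  show "a + b + c = a + (b + c)" by transfer (simp add: G_eq.G_refl)
  show "0 + a = a" by transfer (simp add: G_eq.G_refl)
  show "a + 0 = a" by transfer (simp add: G_eq.G_refl)
  show "- a + a = 0" by transfer (rule G_inv_l)
  show "a + - b = a - b" unfolding minus_grp_def by (rule refl)
qed
end

definition val :: "word \<Rightarrow> grp" where "val = abs_grp"

lemma val_eq_iff: "val u = val v \<longleftrightarrow> G_eq u v"
  unfolding val_def by (simp add: grp.abs_eq_iff)
lemma val_append: "val (u @ v) = val u + val v"
  unfolding val_def by (simp add: plus_grp.abs_eq)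
lemma val_winv: "val (winv u) = - val u"
  unfolding val_def by (simp add: uminus_grp.abs_eq)
lemma val_Nil: "val [] = 0"
  unfolding val_def by (simp add: zero_grp.abs_eq)
lemma val_rel: "r \<in> G_relators \<Longrightarrow> val r = 0"
proof -
  assume "r \<in> G_relators"
  then have "G_eq ([] @ r @ []) ([] @ [])" by (rule G_eq.G_rel)
  then have "val r = val []" by (simp add: val_eq_iff)
  then show ?thesis by (simp add: val_Nil)
qed




declare add_uminus_conv_diff[simp del]
lemmas gsimps = add.assoc minus_add add_minus_cancel minus_add_cancel

definition ea :: grp where "ea = val la"
definition es :: grp where "es = val ls"
definition et :: grp where "et = val lt"

lemma val_single: "val [(Ga,False)] = ea" "val [(Gs,False)] = es" "val [(Gt,False)] = et"
  "val [(Ga,True)] = - ea" "val [(Gs,True)] = - es" "val [(Gt,True)] = - et"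
  using val_winv[of la] val_winv[of ls] val_winv[of lt]
  by (auto simp: ea_def es_def et_def flip_def)

lemma val_Cons: "val (x # w) = val [x] + val w"
  using val_append[of "[x]" w] by simp

lemma rels: "ea + ea = 0"
  "- ea + - (- et + ea + et) + ea + (- et + ea + et) = 0"
  "- es + - et + es + et = 0"
  "(- es + ea + es) + - (ea + (- et + ea + et)) = 0"
proof -
  have r: "la @ la \<in> G_relators" "wcomm la (wconj la lt) \<in> G_relators" "wcomm ls lt \<in> G_relators"
    "wconj la ls @ winv (la @ wconj la lt) \<in> G_relators" by (auto simp: G_relators_def)
  have c: "val (wconj x y) = - val y + val x + val y" for x y
    by (simp add: wconj_def val_append val_winv gsimps)
  have m: "val (wcomm x y) = - val x + - val y + val x + val y" for x y
    by (simp add: wcomm_def val_append val_winv gsimps)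
  show "ea + ea = 0" using val_rel[OF r(1)] by (simp only: val_append ea_def)
  show "- ea + - (- et + ea + et) + ea + (- et + ea + et) = 0" using val_rel[OF r(2)]
    by (simp only: m c ea_def et_def)
  show "- es + - et + es + et = 0" using val_rel[OF r(3)] by (simp only: m es_def et_def)
  show "(- es + ea + es) + - (ea + (- et + ea + et)) = 0" using val_rel[OF r(4)]
    by (simp only: c val_append val_winv ea_def es_def et_def)
qed

lemma eq_from: "x + - y = 0 \<Longrightarrow> x = (y::'a::group_add)"
proof -
  assume h: "x + - y = 0"
  have "x = (x + - y) + y" by (simp add: gsimps)
  then show ?thesis using h by simp
qed

lemma ea_inv: "- ea = ea"
  using rels(1) by (rule minus_unique)

lemma comm_from: "- x + - y + x + y = 0 \<Longrightarrow> x + y = y + (x::'a::group_add)"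
proof -
  assume h: "- x + - y + x + y = 0"
  have "y + x + (- x + - y + x + y) = y + x" using h by simp
  then show ?thesis by (simp add: gsimps)
qed

lemma st_comm: "et + es = es + et"
  using comm_from[OF rels(3)] by simp

fun np :: "'a::group_add \<Rightarrow> nat \<Rightarrow> 'a" where
  "np x 0 = 0" | "np x (Suc n) = np x n + x"

definition ip :: "'a::group_add \<Rightarrow> int \<Rightarrow> 'a" where
  "ip x m = (if 0 \<le> m then np x (nat m) else - np x (nat (- m)))"

lemma np_comm_gen: "x + y = y + x \<Longrightarrow> x + np y n = np y n + (x::'a::group_add)"
proof (induction n)
  case 0 then show ?case by simp
next
  case (Suc n)
  have "x + np y (Suc n) = (x + np y n) + y" by (simp add: gsimps)
  also have "\<dots> = np y n + (x + y)" using Suc by (simp add: gsimps)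
  also have "\<dots> = np y (Suc n) + x" using Suc.prems by (simp add: gsimps)
  finally show ?case .
qed

lemma comm_neg: "x + y = y + x \<Longrightarrow> x + - y = - y + (x::'a::group_add)"
proof -
  assume h: "x + y = y + x"
  have "- y + (x + y) + - y = - y + (y + x) + - y" using h by simp
  then show ?thesis by (simp add: gsimps)
qed

lemma ip_comm_gen: "x + y = y + x \<Longrightarrow> x + ip y m = ip y m + (x::'a::group_add)"
proof -
  assume h: "x + y = y + x"
  show ?thesis
  proof (cases "0 \<le> m")
    case True then show ?thesis using np_comm_gen[OF h] by (simp add: ip_def)
  next
    case False then show ?thesis using comm_neg[OF np_comm_gen[OF h]] by (simp add: ip_def)
  qed
qed

lemma np_self: "np x n + x = x + (np x n::'a::group_add)"
  using np_comm_gen[of x x n] by simp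

lemma ip_succ: "ip x (m + 1) = ip x m + (x::'a::group_add)"
proof (cases "0 \<le> m")
  case True
  then have "nat (m+1) = Suc (nat m)" by simp
  then show ?thesis using True by (simp add: ip_def)
next
  case False
  define j where "j = nat (- m) - 1"
  have j: "nat (- m) = Suc j" "nat (-(m+1)) = j" using False by (auto simp: j_def)
  have c: "x + - np x j = - np x j + x" by (rule comm_neg[OF np_self[symmetric]])
  have "- np x (Suc j) + x = - np x j"
    by (simp add: gsimps c[symmetric])
  then show ?thesis using False j
    by (cases "0 \<le> m + 1") (auto simp: ip_def)
qed

lemma ip_pred: "ip x (m - 1) = ip x m + - (x::'a::group_add)"
proof -
  have "ip x m = ip x (m - 1) + x" using ip_succ[of x "m - 1"] by simp
  then have "ip x m + - x = ip x (m - 1)" by (simp add: gsimps)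
  then show ?thesis by simp
qed

lemma ip_zero[simp]: "ip x 0 = 0" by (simp add: ip_def)
lemma ip_one: "ip x 1 = x" using ip_succ[of x 0] by simp
lemma ip_mone: "ip x (-1) = - x" using ip_pred[of x 0] by simp

lemma ip_add: "ip x (m + n) = ip x m + ip x (n::int)"
proof (induction n rule: int_induct[where k=0])
  case base then show ?case by simp
next
  case (step1 i)
  have "ip x (m + (i + 1)) = ip x (m + i) + x" using ip_succ[of x "m+i"] by (simp add: gsimps)
  then show ?case using step1 ip_succ[of x i] by (simp add: gsimps)
next
  case (step2 i)
  have "ip x (m + (i - 1)) = ip x (m + i) + - x" using ip_pred[of x "m+i"] by (simp add: algebra_simps)
  then show ?case using step2 ip_pred[of x i] by (simp add: gsimps)
qed

definition P :: "int \<times> int \<Rightarrow> grp" where "P p = ip et (fst p) + ip es (snd p)"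

lemma P_comm: "ip es n + ip et m = ip et m + ip es n"
proof -
  have "et + ip es n = ip es n + et" by (rule ip_comm_gen[OF st_comm])
  then show ?thesis by (rule ip_comm_gen[OF sym])
qed

lemma P_add: "P p + P q = P (p + q)"
proof -
  have "P p + P q = ip et (fst p) + (ip es (snd p) + ip et (fst q)) + ip es (snd q)"
    by (simp add: P_def gsimps)
  also have "\<dots> = ip et (fst p) + (ip et (fst q) + ip es (snd p)) + ip es (snd q)"
    by (simp add: P_comm)
  also have "\<dots> = P (p + q)" by (simp add: P_def ip_add gsimps)
  finally show ?thesis .
qed

lemma P_zero[simp]: "P 0 = 0" "P (0,0) = 0" by (simp_all add: P_def)
lemma P_gens: "P (1,0) = et" "P (-1,0) = - et" "P (0,1) = es" "P (0,-1) = - es"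
  by (simp_all add: P_def ip_one ip_mone)

lemma P_neg: "- P p = P (- p)"
  using P_add[of p "-p"] by (intro minus_unique) simp

definition A :: "int \<times> int \<Rightarrow> grp" where "A p = P p + ea + - P p"

lemma A_conj: "P d + A p + - P d = A (d + p)"
  by (simp add: A_def gsimps minus_add P_add[symmetric])

lemma conj_hom: "c + (x + y) + - c = (c + x + - c) + (c + y + - (c::grp))"
  by (simp add: gsimps)

lemma A_sq: "A p + A p = 0"
proof -
  have "A p + A p = P p + (ea + ea) + - P p" by (simp add: A_def gsimps)
  then show ?thesis by (simp add: rels(1))
qed

lemma A_zero: "A (0,0) = ea" by (simp add: A_def)

lemma K1_base: "A (0,-1) = A (0,0) + A (-1,0)"
proof -
  have "A (0,-1) = - es + ea + es" by (simp add: A_def P_gens)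
  moreover have "A (-1,0) = - et + ea + et" by (simp add: A_def P_gens)
  moreover have "- es + ea + es = ea + (- et + ea + et)"
    using rels(4) by (rule eq_from)
  ultimately show ?thesis by (simp add: A_zero)
qed

lemma K1: "A (m, n - 1) = A (m, n) + A (m - 1, n)"
proof -
  have "P (m,n) + A (0,-1) + - P (m,n) = P (m,n) + (A (0,0) + A (-1,0)) + - P (m,n)"
    by (simp add: K1_base)
  then show ?thesis by (simp only: conj_hom A_conj) (simp add: add_uminus_conv_diff)
qed

lemma K2_base: "A (0,0) + A (-1,0) = A (-1,0) + A (0,0)"
proof -
  have "A (-1,0) = - et + ea + et" by (simp add: A_def P_gens)
  then show ?thesis using comm_from[OF rels(2)] by (simp add: A_zero)
qed

lemma K2: "A (m, n) + A (m - 1, n) = A (m - 1, n) + A (m, n)"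
proof -
  have "P (m,n) + (A (0,0) + A (-1,0)) + - P (m,n) = P (m,n) + (A (-1,0) + A (0,0)) + - P (m,n)"
    by (simp add: K2_base)
  then show ?thesis by (simp only: conj_hom A_conj) (simp add: add_uminus_conv_diff)
qed




lemma swap4:
  fixes X0 X1 Y0 Y1 :: "'a::group_add"
  assumes c1: "Y1 + X1 = X1 + Y1" and c2: "X1 + Y0 = Y0 + X1" and c3: "X0 + Y1 = Y1 + X0"
    and B: "(X1 + X0) + (Y0 + Y1) = (Y0 + Y1) + (X1 + X0)"
  shows "X0 + Y0 = Y0 + X0"
proof -
  have "(Y0 + Y1) + (X1 + X0) = Y0 + (Y1 + X1) + X0" by (simp add: add.assoc)
  also have "\<dots> = Y0 + (X1 + Y1) + X0" using c1 by simp
  also have "\<dots> = (Y0 + X1) + (Y1 + X0)" by (simp add: add.assoc)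
  also have "\<dots> = (X1 + Y0) + (X0 + Y1)" using c2 c3 by simp
  finally have "X1 + ((X0 + Y0) + Y1) = X1 + ((Y0 + X0) + Y1)" using B by (simp add: add.assoc)
  then show ?thesis by simp
qed

lemma K3_nat: "\<forall>i n. A (i, n) + A (i + int d, n) = A (i + int d, n) + A (i, n)"
proof (induction d rule: less_induct)
  case (less d)
  show ?case
  proof (intro allI)
    fix i n
    show "A (i, n) + A (i + int d, n) = A (i + int d, n) + A (i, n)"
    proof (cases "d \<le> 1")
      case True
      then consider "d = 0" | "d = 1" by linarith
      then show ?thesis
      proof cases
        case 1 then show ?thesis by simp
      next
        case 2 then show ?thesis using K2[of "i+1" n] by simp
      qed
    next
      case False
      define X0 where "X0 = A (i, n)"
      define X1 where "X1 = A (i + 1, n)"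
      define Y1 where "Y1 = A (i + int d - 1, n)"
      define Y0 where "Y0 = A (i + int d, n)"
      have c1: "Y1 + X1 = X1 + Y1"
        using less.IH[of "d - 2"] False unfolding X1_def Y1_def
        by (auto dest: spec[of _ "i+1"] spec[of _ n] simp: of_nat_diff algebra_simps)
      have c2: "X1 + Y0 = Y0 + X1"
        using less.IH[of "d - 1"] False unfolding X1_def Y0_def
        by (auto dest: spec[of _ "i+1"] spec[of _ n] simp: of_nat_diff algebra_simps)
      have c3: "X0 + Y1 = Y1 + X0"
        using less.IH[of "d - 1"] False unfolding X0_def Y1_def
        by (auto dest: spec[of _ "i"] spec[of _ n] simp: of_nat_diff algebra_simps)
      have B0: "A (i + 1, n - 1) + A (i + int d, n - 1) = A (i + int d, n - 1) + A (i + 1, n - 1)"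
        using less.IH[of "d - 1"] False
        by (auto dest: spec[of _ "i+1"] spec[of _ "n - 1"] simp: of_nat_diff algebra_simps)
      have e1: "A (i + 1, n - 1) = X1 + X0" using K1[of "i+1" n] unfolding X1_def X0_def by simp
      have e2: "A (i + int d, n - 1) = Y0 + Y1" using K1[of "i + int d" n] unfolding Y0_def Y1_def by simp
      have "X0 + Y0 = Y0 + X0" by (rule swap4[OF c1 c2 c3]) (use B0 e1 e2 in simp)
      then show ?thesis unfolding X0_def Y0_def .
    qed
  qed
qed

lemma K3: "A (i, n) + A (j, n) = A (j, n) + A (i, n)"
proof (cases "i \<le> j")
  case True
  then show ?thesis using K3_nat[of "nat (j - i)"] by (auto dest: spec[of _ i])
next
  case False
  then show ?thesis using K3_nat[of "nat (i - j)"] by (auto dest: spec[of _ j])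
qed

inductive_set Rw :: "int \<Rightarrow> grp set" for n where
  Rw0: "0 \<in> Rw n"
| RwA: "x \<in> Rw n \<Longrightarrow> x + A (i, n) \<in> Rw n"

lemma Rw_commA: "x \<in> Rw n \<Longrightarrow> A (i, n) + x = x + A (i, n)"
proof (induction rule: Rw.induct)
  case Rw0 then show ?case by simp
next
  case (RwA x j)
  have "A (i, n) + (x + A (j, n)) = (A (i, n) + x) + A (j, n)" by (simp add: add.assoc)
  also have "\<dots> = x + (A (i, n) + A (j, n))" using RwA by (simp add: add.assoc)
  also have "\<dots> = x + A (j, n) + A (i, n)" using K3[of i n j] by (simp add: add.assoc)
  finally show ?case .
qed

lemma Rw_comm: "y \<in> Rw n \<Longrightarrow> x \<in> Rw n \<Longrightarrow> x + y = y + x"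
proof (induction rule: Rw.induct)
  case Rw0 then show ?case by simp
next
  case (RwA y j)
  have "x + (y + A (j, n)) = (x + y) + A (j, n)" by (simp add: add.assoc)
  also have "\<dots> = y + (x + A (j, n))" using RwA by (simp add: add.assoc)
  also have "\<dots> = y + A (j, n) + x" using Rw_commA[OF RwA.prems, of j] by (simp add: add.assoc)
  finally show ?case .
qed

lemma Rw_add: "y \<in> Rw n \<Longrightarrow> x \<in> Rw n \<Longrightarrow> x + y \<in> Rw n"
proof (induction rule: Rw.induct)
  case Rw0 then show ?case by simp
next
  case (RwA y j)
  then show ?case using Rw.RwA[of "x + y" n j] by (simp add: add.assoc)
qed

lemma A_Rw_nat: "A (m, n - int j) \<in> Rw n"
proof (induction j arbitrary: m)
  case 0 then show ?case using Rw.RwA[OF Rw.Rw0, where n=n and i=m] by simp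
next
  case (Suc j)
  have "A (m, n - int (Suc j)) = A (m, n - int j) + A (m - 1, n - int j)"
    using K1[of m "n - int j"] by (simp add: algebra_simps)
  then show ?case using Rw_add[OF Suc.IH Suc.IH] by simp
qed

lemma A_Rw: assumes "snd p \<le> n" shows "A p \<in> Rw n"
proof -
  obtain a b where p: "p = (a, b)" by (cases p)
  have "A (a, n - int (nat (n - b))) \<in> Rw n" by (rule A_Rw_nat)
  then show ?thesis using assms p by simp
qed

lemma A_comm: "A p + A q = A q + A p"
  using Rw_comm[OF A_Rw A_Rw, of q "max (snd p) (snd q)" p] by simp

lemma A_comm2: "A p + (A q + x) = A q + (A p + x)"
  by (simp add: add.assoc[symmetric] A_comm[of p q])

definition AS :: "(int \<times> int) set \<Rightarrow> grp" where
  "AS S = Finite_Set.fold (\<lambda>p x. A p + x) 0 S"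

interpretation AScf: comp_fun_commute "\<lambda>p x. A p + x"
  by unfold_locales (auto simp: fun_eq_iff A_comm2)

lemma AS_empty[simp]: "AS {} = 0" by (simp add: AS_def)

lemma AS_insert: "finite S \<Longrightarrow> p \<notin> S \<Longrightarrow> AS (insert p S) = A p + AS S"
  by (simp add: AS_def)

lemma AS_single: "AS {p} = A p" using AS_insert[of "{}" p] by simp

lemma AS_commA: "finite S \<Longrightarrow> A p + AS S = AS S + A p"
proof (induction rule: finite_induct)
  case empty then show ?case by simp
next
  case (insert q S)
  have "A p + AS (insert q S) = A p + (A q + AS S)" using insert by (simp add: AS_insert)
  also have "\<dots> = A q + (A p + AS S)" by (rule A_comm2)
  also have "\<dots> = A q + (AS S + A p)" using insert by simp
  also have "\<dots> = AS (insert q S) + A p" using insert by (simp add: AS_insert add.assoc)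
  finally show ?case .
qed

definition sd :: "'a set \<Rightarrow> 'a set \<Rightarrow> 'a set" where "sd X Y = (X - Y) \<union> (Y - X)"

lemma AS_toggle: "finite S \<Longrightarrow> AS (sd S {p}) = A p + AS S"
proof (cases "p \<in> S")
  case True
  assume f: "finite S"
  then have "S = insert p (S - {p})" using True by auto
  then have "AS S = A p + AS (S - {p})" using AS_insert[of "S - {p}" p] f by simp
  moreover have "sd S {p} = S - {p}" using True by (auto simp: sd_def)
  ultimately show ?thesis by (simp add: add.assoc[symmetric] A_sq)
next
  case False
  assume f: "finite S"
  have "sd S {p} = insert p S" using False by (auto simp: sd_def)
  then show ?thesis using AS_insert[OF f False] by simp
qed

lemma AS_sd: "finite T \<Longrightarrow> finite S \<Longrightarrow> AS S + AS T = AS (sd S T)"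
proof (induction T rule: finite_induct)
  case empty then show ?case by (simp add: sd_def)
next
  case (insert p T)
  have fin: "finite (sd S T)" using insert by (simp add: sd_def)
  have "AS S + AS (insert p T) = AS S + (A p + AS T)" using AS_insert insert by simp
  also have "\<dots> = (AS S + A p) + AS T" by (simp add: add.assoc)
  also have "\<dots> = (A p + AS S) + AS T" using AS_commA[OF insert.prems, of p] by simp
  also have "\<dots> = A p + (AS S + AS T)" by (simp add: add.assoc)
  also have "\<dots> = A p + AS (sd S T)" using insert by simp
  also have "\<dots> = AS (sd (sd S T) {p})" using AS_toggle[OF fin] by simp
  also have "sd (sd S T) {p} = sd S (insert p T)" using insert.hyps by (auto simp: sd_def)
  finally show ?case .
qed

lemma push_nat: "\<forall>m n. m + int j = c \<longrightarrow> (\<exists>D. finite D \<and> D \<subseteq> {(c, r) | r. n - int j \<le> r \<and> r \<le> n} \<and> A (m, n) = AS D)"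
proof (induction j)
  case 0 then show ?case by (auto intro!: exI[of _ "{(c, _)}"] simp: AS_single)
next
  case (Suc j)
  show ?case
  proof (intro allI impI)
    fix m n assume h: "m + int (Suc j) = c"
    obtain D1 where D1: "finite D1" "D1 \<subseteq> {(c, r) | r. n - int j \<le> r \<and> r \<le> n}" "A (m + 1, n) = AS D1"
      using Suc.IH[rule_format, of "m+1" n] h by auto
    obtain D2 where D2: "finite D2" "D2 \<subseteq> {(c, r) | r. n - 1 - int j \<le> r \<and> r \<le> n - 1}" "A (m + 1, n - 1) = AS D2"
      using Suc.IH[rule_format, of "m+1" "n - 1"] h by auto
    have "A (m + 1, n - 1) = A (m + 1, n) + A (m, n)" using K1[of "m+1" n] by simp
    then have "A (m, n) = A (m + 1, n) + A (m + 1, n - 1)"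
      by (simp add: add.assoc[symmetric] A_sq)
    then have "A (m, n) = AS (sd D1 D2)" using AS_sd[OF D2(1) D1(1)] D1(3) D2(3) by simp
    moreover have "sd D1 D2 \<subseteq> {(c, r) | r. n - int (Suc j) \<le> r \<and> r \<le> n}"
      using D1(2) D2(2) by (auto simp: sd_def)
    moreover have "finite (sd D1 D2)" using D1 D2 by (simp add: sd_def)
    ultimately show "\<exists>D. finite D \<and> D \<subseteq> {(c, r) | r. n - int (Suc j) \<le> r \<and> r \<le> n} \<and> A (m, n) = AS D"
      by blast
  qed
qed

lemma push_set:
  assumes "finite S" "\<forall>p\<in>S. fst p \<le> c \<and> lo \<le> snd p - (c - fst p) \<and> snd p \<le> hi"
  shows "\<exists>D. finite D \<and> D \<subseteq> {(c, r) | r. lo \<le> r \<and> r \<le> hi} \<and> AS S = AS D"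
  using assms
proof (induction S rule: finite_induct)
  case empty then show ?case by (auto intro: exI[of _ "{}"])
next
  case (insert p S)
  obtain D1 where D1: "finite D1" "D1 \<subseteq> {(c, r) | r. lo \<le> r \<and> r \<le> hi}" "AS S = AS D1"
    using insert by auto
  obtain m n where p: "p = (m, n)" by (cases p)
  have pc: "m \<le> c" "lo \<le> n - (c - m)" "n \<le> hi" using insert.prems p by auto
  obtain D2 where D2: "finite D2" "D2 \<subseteq> {(c, r) | r. n - int (nat (c - m)) \<le> r \<and> r \<le> n}" "A (m, n) = AS D2"
    using push_nat[of "nat (c - m)" c, rule_format, of m n] pc by auto
  have "AS (insert p S) = AS D2 + AS D1" using AS_insert insert D1 D2 p by simp
  also have "\<dots> = AS (sd D2 D1)" using AS_sd D1 D2 by simp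
  finally show ?case using D1 D2 pc
    by (intro exI[of _ "sd D2 D1"]) (auto simp: sd_def)
qed



declare add_uminus_conv_diff[simp]

lemma zero_pair[simp]: "((0::int), (0::int)) = 0" by (simp add: zero_prod_def)

lemma pair_ne0[simp]: "((1::int), (0::int)) \<noteq> 0" "((-1::int), (0::int)) \<noteq> 0"
  "((0::int), (1::int)) \<noteq> 0" "((0::int), (-1::int)) \<noteq> 0"
  by (simp_all add: zero_prod_def del: zero_pair)

definition dl :: "letter \<Rightarrow> int \<times> int" where
  "dl x = (case fst x of Ga \<Rightarrow> (0, 0) | Gt \<Rightarrow> (if snd x then -1 else 1, 0) | Gs \<Rightarrow> (0, if snd x then -1 else 1))"

definition pos :: "word \<Rightarrow> int \<times> int" where "pos w = sum_list (map dl w)"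

lemma pos_simps[simp]: "pos [] = 0" "pos (x # w) = dl x + pos w" "pos (u @ v) = pos u + pos v"
  by (simp_all add: pos_def)

definition stepf :: "(int \<times> int) \<times> (int \<times> int) set \<Rightarrow> letter \<Rightarrow> (int \<times> int) \<times> (int \<times> int) set" where
  "stepf qS x = (fst qS + dl x, if fst x = Ga then sd (snd qS) {fst qS} else snd qS)"

definition st :: "word \<Rightarrow> (int \<times> int) \<times> (int \<times> int) set" where
  "st w = foldl stepf (0, {}) w"

lemma st_Nil[simp]: "st [] = (0, {})" by (simp add: st_def)
lemma st_snoc: "st (w @ [x]) = stepf (st w) x" by (simp add: st_def)

lemma fst_st: "fst (st w) = pos w"
  by (induction w rule: rev_induct) (simp_all add: st_snoc stepf_def)

lemma finite_st: "finite (snd (st w))"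
  by (induction w rule: rev_induct) (simp_all add: st_snoc stepf_def sd_def)

lemma val_letter: "val [x] = (case fst x of Ga \<Rightarrow> ea | Gt \<Rightarrow> P (dl x) | Gs \<Rightarrow> P (dl x))"
proof -
  obtain g b where x: "x = (g, b)" by (cases x)
  show ?thesis using val_single ea_inv P_gens
    by (cases g; cases b) (simp_all add: x dl_def)
qed

lemma A_P: "A q + P q = P q + ea"
  by (simp add: A_def add.assoc)

lemma normal_form: "val w = AS (snd (st w)) + P (pos w)"
proof (induction w rule: rev_induct)
  case Nil then show ?case by (simp add: val_Nil)
next
  case (snoc x w)
  have fin: "finite (snd (st w))" by (rule finite_st)
  have "val (w @ [x]) = AS (snd (st w)) + P (pos w) + val [x]" using snoc by (simp add: val_append)
  also have "\<dots> = AS (snd (st (w @ [x]))) + P (pos (w @ [x]))"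
  proof (cases "fst x = Ga")
    case True
    then have dx: "dl x = 0" by (simp add: dl_def)
    have "AS (snd (st w)) + P (pos w) + ea = AS (snd (st w)) + (A (pos w) + P (pos w))"
      by (simp add: A_P add.assoc)
    also have "\<dots> = (A (pos w) + AS (snd (st w))) + P (pos w)"
      using AS_commA[OF fin, of "pos w"] by (simp add: add.assoc)
    also have "\<dots> = AS (sd (snd (st w)) {pos w}) + P (pos w)" using AS_toggle[OF fin] by simp
    finally show ?thesis using True dx val_letter[of x]
      by (simp add: st_snoc stepf_def fst_st)
  next
    case False
    then have "val [x] = P (dl x)" using val_letter[of x] by (cases "fst x") auto
    then show ?thesis using False by (simp add: st_snoc stepf_def add.assoc P_add)
  qed
  finally show ?case .
qed

fun iv :: "(int \<times> int \<Rightarrow> bool) \<Rightarrow> int \<times> int \<Rightarrow> word \<Rightarrow> bool" where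
  "iv \<phi> q [] = False"
| "iv \<phi> q (x # w) = (if fst x = Ga then \<phi> q \<noteq> iv \<phi> q w else iv \<phi> (q + dl x) w)"

lemma iv_append: "iv \<phi> q (u @ v) = (iv \<phi> q u \<noteq> iv \<phi> (q + pos u) v)"
  by (induction u arbitrary: q) (auto simp: dl_def add.assoc)

definition tri :: "(int \<times> int \<Rightarrow> bool) \<Rightarrow> bool" where
  "tri \<phi> = (\<forall>m n. \<phi> (m, n - 1) = (\<phi> (m, n) \<noteq> \<phi> (m - 1, n)))"

lemma rel_props: "r \<in> G_relators \<Longrightarrow> pos r = 0 \<and> (tri \<phi> \<longrightarrow> (\<forall>q. iv \<phi> q r = False))"
proof -
  assume r: "r \<in> G_relators"
  have "tri \<phi> \<Longrightarrow> \<phi> (a, b - 1) = (\<phi> (a, b) \<noteq> \<phi> (a - 1, b))" for a b by (simp add: tri_def)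
  with r show ?thesis
    by (auto simp: G_relators_def wcomm_def wconj_def winv_def flip_def dl_def)
qed

lemma G_eq_inv: "G_eq u v \<Longrightarrow> pos u = pos v \<and> (tri \<phi> \<longrightarrow> (\<forall>q. iv \<phi> q u = iv \<phi> q v))"
proof (induction rule: G_eq.induct)
  case (G_cancel u x v)
  obtain g b where x: "x = (g, b)" by (cases x)
  show ?case by (cases g) (auto simp: iv_append x flip_def dl_def add.assoc)
next
  case (G_rel r u v)
  have h: "pos r = 0" "tri \<phi> \<longrightarrow> (\<forall>q. iv \<phi> q r = False)" using rel_props[OF G_rel, of \<phi>] by auto
  have h2: "tri \<phi> \<Longrightarrow> iv \<phi> q r = False" for q using h by (cases q) auto
  show ?case using h(1) h2 by (auto simp: iv_append)
qed auto

definition vp :: "(int \<times> int \<Rightarrow> bool) \<Rightarrow> (int \<times> int) set \<Rightarrow> bool" where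
  "vp \<phi> S = odd (card {p \<in> S. \<phi> p})"

lemma vp_toggle: "finite S \<Longrightarrow> vp \<phi> (sd S {q}) = (vp \<phi> S \<noteq> \<phi> q)"
proof (cases "q \<in> S")
  case True
  assume f: "finite S"
  have e: "{p \<in> sd S {q}. \<phi> p} = {p \<in> S. \<phi> p} - {q}" using True by (auto simp: sd_def)
  have fX: "finite {p \<in> S. \<phi> p}" using f by simp
  show ?thesis
  proof (cases "\<phi> q")
    case True2: True
    have qX: "q \<in> {p \<in> S. \<phi> p}" using True True2 by simp
    then have c: "card ({p \<in> S. \<phi> p} - {q}) = card {p \<in> S. \<phi> p} - 1" using fX by simp
    have "card {p \<in> S. \<phi> p} \<ge> 1" using qX fX by (metis One_nat_def Suc_leI card_gt_0_iff empty_iff)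
    then show ?thesis unfolding vp_def e c using True2 by (cases "card {p \<in> S. \<phi> p}") auto
  next
    case False2: False
    have "{p \<in> S. \<phi> p} - {q} = {p \<in> S. \<phi> p}" using False2 by auto
    then show ?thesis unfolding vp_def e using False2 by simp
  qed
next
  case False
  assume f: "finite S"
  have e: "{p \<in> sd S {q}. \<phi> p} = (if \<phi> q then insert q {p \<in> S. \<phi> p} else {p \<in> S. \<phi> p})"
    using False by (auto simp: sd_def)
  have "finite {p \<in> S. \<phi> p}" using f by simp
  then show ?thesis using False unfolding vp_def e by auto
qed

lemma iv_vp: "iv \<phi> 0 w = vp \<phi> (snd (st w))"
proof (induction w rule: rev_induct)
  case Nil then show ?case by (simp add: vp_def)
next
  case (snoc x w)
  show ?case using snoc vp_toggle[OF finite_st, of \<phi> w "pos w"]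
    by (auto simp: iv_append st_snoc stepf_def fst_st)
qed

lemma vp_ex: assumes "vp \<phi> S" shows "\<exists>p\<in>S. \<phi> p"
proof (rule ccontr)
  assume "\<not> (\<exists>p\<in>S. \<phi> p)"
  then have e: "{p \<in> S. \<phi> p} = {}" by blast
  show False using assms unfolding vp_def e by simp
qed

lemma st_toggles: "p \<in> snd (st w) \<Longrightarrow> \<exists>i < length w. fst (w ! i) = Ga \<and> pos (take i w) = p"
proof (induction w rule: rev_induct)
  case Nil then show ?case by simp
next
  case (snoc x w)
  show ?case
  proof (cases "p \<in> snd (st w)")
    case True
    then obtain i where "i < length w" "fst (w ! i) = Ga" "pos (take i w) = p" using snoc by auto
    then show ?thesis by (intro exI[of _ i]) (auto simp: nth_append)
  next
    case False
    then have "fst x = Ga \<and> p = pos w" using snoc.prems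
      by (auto simp: st_snoc stepf_def sd_def fst_st split: if_splits)
    then show ?thesis by (intro exI[of _ "length w"]) auto
  qed
qed

definition nt :: "word \<Rightarrow> nat" where "nt w = length (filter (\<lambda>x. fst x = Gt) w)"
definition ns :: "word \<Rightarrow> nat" where "ns w = length (filter (\<lambda>x. fst x = Gs) w)"

lemma nt_simps[simp]: "nt [] = 0" "nt (u @ v) = nt u + nt v" by (simp_all add: nt_def)
lemma ns_simps[simp]: "ns [] = 0" "ns (u @ v) = ns u + ns v" by (simp_all add: ns_def)

lemma nt_bound: "\<bar>fst (pos w)\<bar> \<le> int (nt w)"
proof (induction w)
  case Nil then show ?case by simp
next
  case (Cons x w)
  obtain g b where x: "x = (g, b)" by (cases x)
  have "nt (x # w) = nt [x] + nt w" using nt_simps(2)[of "[x]" w] by simp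
  then show ?case using Cons by (cases g; cases b) (auto simp: x dl_def nt_def)
qed

lemma ns_bound: "\<bar>snd (pos w)\<bar> \<le> int (ns w)"
proof (induction w)
  case Nil then show ?case by simp
next
  case (Cons x w)
  obtain g b where x: "x = (g, b)" by (cases x)
  have "ns (x # w) = ns [x] + ns w" using ns_simps(2)[of "[x]" w] by simp
  then show ?case using Cons by (cases g; cases b) (auto simp: x dl_def ns_def)
qed




lemma A_sym_small: "x \<in> A_sym \<Longrightarrow> nt x + ns x \<le> 1"
  by (auto simp: A_sym_def A_set_def winv_def flip_def nt_def ns_def)

lemma concat_small: "set ws \<subseteq> A_sym \<Longrightarrow> nt (concat ws) + ns (concat ws) \<le> length ws"
proof (induction ws)
  case Nil then show ?case by simp
next
  case (Cons x ws)
  then show ?case using A_sym_small[of x] by simp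
qed

lemma letter_in:
  assumes "fst d \<noteq> Ga"
  shows "(if b1 then [(Ga, snd d)] else []) @ [d] @ (if b2 then [(Ga, snd d)] else []) \<in> A_sym"
proof -
  obtain g b where d: "d = (g, b)" by (cases d)
  show ?thesis using assms
    by (cases g; cases b; cases b1; cases b2) (auto simp: d A_sym_def A_set_def winv_def flip_def)
qed

definition verts :: "word \<Rightarrow> (int \<times> int) set" where
  "verts mv = {pos (take i mv) | i. i \<le> length mv}"

lemma verts_snoc: "verts (mv @ [d]) = insert (pos (mv @ [d])) (verts mv)"
proof -
  have "{pos (take i (mv @ [d])) | i. i \<le> length (mv @ [d])} =
        insert (pos (mv @ [d])) {pos (take i mv) | i. i \<le> length mv}"
  proof (intro set_eqI iffI)
    fix z assume "z \<in> {pos (take i (mv @ [d])) | i. i \<le> length (mv @ [d])}"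
    then obtain i where i: "i \<le> Suc (length mv)" "z = pos (take i (mv @ [d]))" by auto
    then show "z \<in> insert (pos (mv @ [d])) {pos (take i mv) | i. i \<le> length mv}"
      by (cases "i \<le> length mv") auto
  next
    fix z assume "z \<in> insert (pos (mv @ [d])) {pos (take i mv) | i. i \<le> length mv}"
    then show "z \<in> {pos (take i (mv @ [d])) | i. i \<le> length (mv @ [d])}"
    proof
      assume "z = pos (mv @ [d])"
      then show ?thesis by (intro CollectI exI[of _ "Suc (length mv)"]) simp
    next
      assume "z \<in> {pos (take i mv) | i. i \<le> length mv}"
      then obtain i where "i \<le> length mv" "z = pos (take i mv)" by auto
      then show ?thesis by (intro CollectI exI[of _ i]) auto
    qed
  qed
  then show ?thesis by (simp add: verts_def)
qed

lemma verts_Nil[simp]: "verts [] = {0}" by (simp add: verts_def)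

lemma walk:
  "(\<forall>x\<in>set mv. fst x \<noteq> Ga) \<Longrightarrow> T \<subseteq> verts mv \<Longrightarrow> (mv = [] \<longrightarrow> T = {}) \<Longrightarrow>
   \<exists>ws. set ws \<subseteq> A_sym \<and> length ws = length mv \<and> st (concat ws) = (pos mv, T)"
proof (induction mv arbitrary: T rule: rev_induct)
  case Nil then show ?case by (intro exI[of _ "[]"]) auto
next
  case (snoc d mv)
  have dG: "fst d \<noteq> Ga" using snoc.prems by simp
  have dnz: "dl d \<noteq> 0" using dG by (cases "fst d") (auto simp: dl_def)
  define q where "q = pos (mv @ [d])"
  show ?case
  proof (cases "mv = []")
    case True
    have T: "T \<subseteq> {0, dl d}" using snoc.prems True verts_snoc[of mv d] by (auto simp: q_def)
    define b1 where "b1 = (0 \<in> T)"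
    define b2 where "b2 = (dl d \<in> T)"
    define lt where "lt = (if b1 then [(Ga, snd d)] else []) @ [d] @ (if b2 then [(Ga, snd d)] else [])"
    have "lt \<in> A_sym" unfolding lt_def by (rule letter_in[OF dG])
    moreover have "st lt = (dl d, T)"
    proof -
      have "T = (if b1 then {0} else {}) \<union> (if b2 then {dl d} else {})"
        using T by (auto simp: b1_def b2_def)
      then show ?thesis using dnz dG
        by (cases b1; cases b2) (auto simp: lt_def st_def stepf_def sd_def dl_def)
    qed
    ultimately show ?thesis using True by (intro exI[of _ "[lt]"]) simp
  next
    case False
    define T' where "T' = T \<inter> verts mv"
    have vs: "verts (mv @ [d]) = insert q (verts mv)" by (simp add: verts_snoc q_def)
    obtain ws where ws: "set ws \<subseteq> A_sym" "length ws = length mv" "st (concat ws) = (pos mv, T')"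
      using snoc.IH[of T'] snoc.prems False by (auto simp: T'_def)
    define b2 where "b2 = (q \<in> T \<and> q \<notin> verts mv)"
    define lt where "lt = (if False then [(Ga, snd d)] else []) @ [d] @ (if b2 then [(Ga, snd d)] else [])"
    have "lt \<in> A_sym" unfolding lt_def by (rule letter_in[OF dG])
    have qT': "q \<notin> T' \<or> \<not> b2" by (auto simp: T'_def b2_def)
    have TT: "T = T' \<union> (if b2 then {q} else {})" using snoc.prems vs by (auto simp: T'_def b2_def)
    have "st (concat ws @ lt) = (q, T)"
    proof (cases b2)
      case True
      have "st (concat ws @ lt) = stepf (stepf (st (concat ws)) d) (Ga, snd d)"
        using True by (simp add: lt_def st_snoc[symmetric])
      then show ?thesis using True dG qT' TT ws(3)
        by (auto simp: stepf_def sd_def q_def dl_def)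
    next
      case False
      have "st (concat ws @ lt) = stepf (st (concat ws)) d"
        using False by (simp add: lt_def st_snoc[symmetric])
      then show ?thesis using False dG TT ws(3) by (auto simp: stepf_def q_def)
    qed
    then show ?thesis using ws \<open>lt \<in> A_sym\<close> by (intro exI[of _ "ws @ [lt]"]) (auto simp: q_def)
  qed
qed




definition gb :: "int \<Rightarrow> int \<Rightarrow> bool" where
  "gb r j = (if j < 0 then False else if 0 \<le> r then odd (nat r choose nat j)
             else odd ((nat (- r) + nat j - 1) choose nat j))"

lemma gb_zero: "gb r 0 = True" by (simp add: gb_def)
lemma gb_neg: "j < 0 \<Longrightarrow> gb r j = False" by (simp add: gb_def)

lemma gb_pascal: assumes "j \<ge> 1" shows "gb r j = (gb (r - 1) j \<noteq> gb (r - 1) (j - 1))"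
proof -
  obtain J where J: "nat j = Suc J" "nat (j - 1) = J" using assms by (intro that[of "nat j - 1"]) auto
  show ?thesis
  proof (cases "r \<ge> 1")
    case True
    obtain R where R: "nat r = Suc R" "nat (r - 1) = R" using True by (intro that[of "nat r - 1"]) auto
    show ?thesis using assms True R J by (auto simp: gb_def)
  next
    case False
    show ?thesis
    proof (cases "r = 0")
      case True
      then show ?thesis using assms J by (simp add: gb_def)
    next
      case False2: False
      define R where "R = nat (- r)"
      have R1: "R \<ge> 1" using False False2 by (simp add: R_def)
      have e1: "nat (- (r - 1)) = Suc R" using False False2 by (simp add: R_def)
      have "(Suc R + nat j - 1) choose nat j = (R + nat j - 1 choose nat j) + (R + nat j - 1 choose (nat (j - 1)))"
      proof -
        obtain M where M: "R + nat j - 1 = M" by blast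
        have "Suc R + nat j - 1 = Suc M" using M R1 by simp
        moreover have "Suc M choose Suc J = (M choose J) + (M choose Suc J)" by simp
        ultimately show ?thesis using J M by simp
      qed
      moreover have "R + nat (j - 1) - 1 = R + nat j - 1 - 1" using J by simp
      ultimately show ?thesis using assms False False2 e1 J R1
        by (auto simp: gb_def R_def[symmetric])
    qed
  qed
qed

definition psi1 :: "int \<times> int \<Rightarrow> bool" where "psi1 p = gb (- snd p) (fst p)"
definition psi2 :: "int \<times> int \<Rightarrow> bool" where "psi2 p = gb (- fst p) (snd p)"
definition psi3 :: "int \<times> int \<Rightarrow> bool" where "psi3 p = gb (- snd p) (- (fst p + snd p))"

lemma tri_psi1: "tri psi1"
  unfolding tri_def psi1_def
proof (intro allI)
  fix m n :: int
  show "gb (- snd (m, n - 1)) (fst (m, n - 1)) = (gb (- snd (m, n)) (fst (m, n)) \<noteq> gb (- snd (m - 1, n)) (fst (m - 1, n)))"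
  proof (cases "m \<ge> 1")
    case True
    then show ?thesis using gb_pascal[of m "- n + 1"] by simp
  next
    case False
    then consider "m = 0" | "m < 0" by linarith
    then show ?thesis by cases (simp_all add: gb_zero gb_neg)
  qed
qed

lemma tri_psi2: "tri psi2"
  unfolding tri_def psi2_def
proof (intro allI)
  fix m n :: int
  show "gb (- fst (m, n - 1)) (snd (m, n - 1)) = (gb (- fst (m, n)) (snd (m, n)) \<noteq> gb (- fst (m - 1, n)) (snd (m - 1, n)))"
  proof (cases "n \<ge> 1")
    case True
    then show ?thesis using gb_pascal[of n "- m + 1"] by auto
  next
    case False
    then consider "n = 0" | "n < 0" by linarith
    then show ?thesis by cases (simp_all add: gb_zero gb_neg)
  qed
qed

lemma tri_psi3: "tri psi3"
  unfolding tri_def psi3_def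
proof (intro allI)
  fix m n :: int
  show "gb (- snd (m, n - 1)) (- (fst (m, n - 1) + snd (m, n - 1))) =
    (gb (- snd (m, n)) (- (fst (m, n) + snd (m, n))) \<noteq> gb (- snd (m - 1, n)) (- (fst (m - 1, n) + snd (m - 1, n))))"
  proof (cases "- m - n + 1 \<ge> 1")
    case True
    then show ?thesis using gb_pascal[of "- m - n + 1" "- n + 1"] by (auto simp: algebra_simps)
  next
    case False
    then consider "- m - n + 1 = 0" | "- m - n + 1 < 0" by linarith
    then show ?thesis
    proof cases
      case 1
      then have e: "- (m + (n - 1)) = 0" "- (m + n) = -1" "- (m - 1 + n) = 0" by auto
      show ?thesis unfolding fst_conv snd_conv e by (simp add: gb_zero gb_neg)
    next
      case 2
      then show ?thesis by (simp add: gb_neg)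
    qed
  qed
qed

lemma tri_shift: "tri \<phi> \<Longrightarrow> tri (\<lambda>p. \<phi> (p + c))"
  unfolding tri_def
proof (intro allI)
  fix m n
  assume h: "\<forall>m n. \<phi> (m, n - 1) = (\<phi> (m, n) \<noteq> \<phi> (m - 1, n))"
  obtain a b where c: "c = (a, b)" by (cases c)
  show "\<phi> ((m, n - 1) + c) = (\<phi> ((m, n) + c) \<noteq> \<phi> ((m - 1, n) + c))"
    using h[rule_format, of "m + a" "n + b"] by (simp add: c algebra_simps)
qed

lemma two_pt:
  assumes "i \<le> length w" "j \<le> length w" "pos w = 0"
  shows "2 * \<bar>fst (pos (take i w)) - fst (pos (take j w))\<bar> \<le> int (nt w)"
    and "2 * \<bar>snd (pos (take i w)) - snd (pos (take j w))\<bar> \<le> int (ns w)"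
proof -
  have gen: "2 * \<bar>fst (pos (take i w)) - fst (pos (take j w))\<bar> \<le> int (nt w) \<and>
             2 * \<bar>snd (pos (take i w)) - snd (pos (take j w))\<bar> \<le> int (ns w)"
    if ij: "i \<le> j" "j \<le> length w" "pos w = 0" for i j
  proof -
    define a where "a = take i w"
    define b where "b = drop i (take j w)"
    define c where "c = drop j w"
    have tj: "take j w = a @ b" using ij by (simp add: a_def b_def take_add[symmetric] min_def)
      (metis append_take_drop_id le_add_diff_inverse take_add take_take min_def)
    have w: "w = a @ b @ c" using tj by (metis append.assoc append_take_drop_id c_def)
    have p0: "pos a + pos b + pos c = 0" using w ij(3) by (simp add: add.assoc)
    have n1: "nt w = nt a + nt b + nt c" "ns w = ns a + ns b + ns c" using w by simp_all
    have "\<bar>fst (pos a)\<bar> \<le> int (nt a)" "\<bar>fst (pos b)\<bar> \<le> int (nt b)" "\<bar>fst (pos c)\<bar> \<le> int (nt c)"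
      "\<bar>snd (pos a)\<bar> \<le> int (ns a)" "\<bar>snd (pos b)\<bar> \<le> int (ns b)" "\<bar>snd (pos c)\<bar> \<le> int (ns c)"
      by (simp_all add: nt_bound ns_bound)
    moreover have "fst (pos a) + fst (pos b) + fst (pos c) = 0" "snd (pos a) + snd (pos b) + snd (pos c) = 0"
      using arg_cong[OF p0, of fst] arg_cong[OF p0, of snd] by simp_all
    ultimately show ?thesis using tj a_def n1 by auto
  qed
  show "2 * \<bar>fst (pos (take i w)) - fst (pos (take j w))\<bar> \<le> int (nt w)"
    using gen[of i j] gen[of j i] assms by (cases "i \<le> j") (auto simp: abs_minus_commute)
  show "2 * \<bar>snd (pos (take i w)) - snd (pos (take j w))\<bar> \<le> int (ns w)"
    using gen[of i j] gen[of j i] assms by (cases "i \<le> j") (auto simp: abs_minus_commute)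
qed




lemma find_toggle:
  assumes "tri \<phi>" "G_eq w g" "vp \<phi> (snd (st g))"
  shows "\<exists>i \<le> length w. \<phi> (pos (take i w))"
proof -
  have "iv \<phi> 0 w = iv \<phi> 0 g" using G_eq_inv[OF assms(2), of \<phi>] assms(1) by blast
  then have "vp \<phi> (snd (st w))" using assms(3) by (simp add: iv_vp)
  then obtain p where "p \<in> snd (st w)" "\<phi> p" using vp_ex by blast
  then show ?thesis using st_toggles by (metis less_imp_le)
qed

lemma vp_two:
  assumes "\<phi> a" "\<not> \<phi> b"
  shows "vp \<phi> {a, b}"
proof -
  have "{p \<in> {a, b}. \<phi> p} = {a}" using assms by auto
  then show ?thesis by (simp add: vp_def)
qed

lemma arith8: "2 * \<bar>a - c\<bar> \<le> aa \<Longrightarrow> 2 * \<bar>b - d\<bar> \<le> bb \<Longrightarrow> aa + bb \<le> L \<Longrightarrow>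
   k \<le> a \<Longrightarrow> k \<le> b \<Longrightarrow> c + d \<le> - 2 * k \<Longrightarrow> 8 * k \<le> (L::int)"
  by (simp add: abs_if split: if_splits)

lemma lower:
  fixes k :: nat
  assumes k: "k \<ge> 1" and ws: "set ws \<subseteq> A_sym" and eq: "G_eq (concat ws) g"
    and stg: "st g = (0, {(int k, int k), (- int k, - int k)})"
  shows "8 * k \<le> length ws"
proof -
  define w where "w = concat ws"
  have eqw: "G_eq w g" using eq by (simp add: w_def)
  have pw: "pos w = 0" using G_eq_inv[OF eqw] fst_st[of g] stg by simp
  define f1 where "f1 = (\<lambda>p. psi1 (p + (- int k, - int k)))"
  define f2 where "f2 = (\<lambda>p. psi2 (p + (- int k, - int k)))"
  define f3 where "f3 = (\<lambda>p. psi3 (p + (int k, int k)))"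
  have t: "tri f1" "tri f2" "tri f3" unfolding f1_def f2_def f3_def
    using tri_shift tri_psi1 tri_psi2 tri_psi3 by blast+
  have v1: "vp f1 (snd (st g))" using stg k
    by (simp add: vp_two f1_def psi1_def gb_zero gb_neg)
  have v2: "vp f2 (snd (st g))" using stg k
    by (simp add: vp_two f2_def psi2_def gb_zero gb_neg)
  have v3: "vp f3 (snd (st g))" using stg k
    by (simp add: insert_commute[of "(int k, int k)"] vp_two f3_def psi3_def gb_zero gb_neg)
  obtain i1 where i1: "i1 \<le> length w" "f1 (pos (take i1 w))" using find_toggle[OF t(1) eqw v1] by blast
  obtain i2 where i2: "i2 \<le> length w" "f2 (pos (take i2 w))" using find_toggle[OF t(2) eqw v2] by blast
  obtain i3 where i3: "i3 \<le> length w" "f3 (pos (take i3 w))" using find_toggle[OF t(3) eqw v3] by blast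
  have x: "fst (pos (take i1 w)) \<ge> int k"
    using i1(2) gb_neg by (force simp: f1_def psi1_def)
  have y: "snd (pos (take i2 w)) \<ge> int k"
    using i2(2) gb_neg by (force simp: f2_def psi2_def)
  have z: "fst (pos (take i3 w)) + snd (pos (take i3 w)) \<le> - 2 * int k"
    using i3(2) gb_neg by (force simp: f3_def psi3_def)
  have a: "2 * \<bar>fst (pos (take i1 w)) - fst (pos (take i3 w))\<bar> \<le> int (nt w)"
    using two_pt(1)[OF i1(1) i3(1) pw] .
  have b: "2 * \<bar>snd (pos (take i2 w)) - snd (pos (take i3 w))\<bar> \<le> int (ns w)"
    using two_pt(2)[OF i2(1) i3(1) pw] .
  have "nt w + ns w \<le> length ws" using concat_small[OF ws] by (simp add: w_def)
  then have c: "int (nt w) + int (ns w) \<le> int (length ws)" by linarith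
  have d: "fst (pos (take i1 w)) - fst (pos (take i3 w)) \<le> \<bar>fst (pos (take i1 w)) - fst (pos (take i3 w))\<bar>"
    "snd (pos (take i2 w)) - snd (pos (take i3 w)) \<le> \<bar>snd (pos (take i2 w)) - snd (pos (take i3 w))\<bar>"
    by simp_all
  have "8 * int k \<le> int (length ws)" by (rule arith8[OF a b c x y z])
  then show ?thesis by linarith
qed

definition tp :: letter where "tp = (Gt, False)"
definition tm :: letter where "tm = (Gt, True)"
definition sp :: letter where "sp = (Gs, False)"
definition sm :: letter where "sm = (Gs, True)"

lemma dl_moves[simp]: "dl tp = (1, 0)" "dl tm = (-1, 0)" "dl sp = (0, 1)" "dl sm = (0, -1)"
  "fst tp \<noteq> Ga" "fst tm \<noteq> Ga" "fst sp \<noteq> Ga" "fst sm \<noteq> Ga"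
  by (simp_all add: dl_def tp_def tm_def sp_def sm_def)

lemma pos_rep[simp]: "pos (replicate n x) = (int n * fst (dl x), int n * snd (dl x))"
  by (induction n) (simp_all add: algebra_simps prod_eq_iff)

lemma verts_mid: "v \<in> verts ys \<Longrightarrow> pos xs + v \<in> verts (xs @ ys @ zs)"
proof -
  assume "v \<in> verts ys"
  then obtain i where i: "i \<le> length ys" "v = pos (take i ys)" by (auto simp: verts_def)
  have "take (length xs + i) (xs @ ys @ zs) = xs @ take i ys" using i by simp
  then show ?thesis using i unfolding verts_def
    by (intro CollectI exI[of _ "length xs + i"]) auto
qed

lemma verts_pre: "pos xs \<in> verts (xs @ zs)"
  using verts_mid[of 0 "[]" xs zs] by simp

lemma rep_vert: "i \<le> n \<Longrightarrow> pos (replicate i x) \<in> verts (replicate n x)"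
  unfolding verts_def by (intro CollectI exI[of _ i]) (simp add: min_def)

lemma moves_ok: "set mv \<subseteq> {tp, tm, sp, sm} \<Longrightarrow> \<forall>x\<in>set mv. fst x \<noteq> Ga"
  by auto




lemma pathA:
  fixes k N :: nat and e1 e2 :: int
  assumes "N \<le> k" "k \<ge> 1" "\<bar>e1\<bar> \<le> int k" "\<bar>e2\<bar> \<le> int k" "e1 + e2 \<ge> 0"
  shows "\<exists>mv. set mv \<subseteq> {tp, tm, sp, sm} \<and> mv \<noteq> [] \<and> length mv \<le> 8 * k \<and> pos mv = (e1, e2) \<and>
    (int k, int k) \<in> verts mv \<and> (- int k, - int k) \<in> verts mv \<and>
    (\<forall>r. - int k \<le> r \<and> r \<le> int k \<longrightarrow> (int N, r) \<in> verts mv)"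
proof -
  define a where "a = replicate k tm"
  define b where "b = replicate k sm"
  define c where "c = replicate (N + k) tp"
  define d where "d = replicate (2 * k) sp"
  define e where "e = replicate (k - N) tp"
  define f where "f = replicate (nat (int k - e1)) tm"
  define g where "g = replicate (nat (int k - e2)) sm"
  define mv where "mv = a @ b @ c @ d @ e @ f @ g"
  have s: "set mv \<subseteq> {tp, tm, sp, sm}" by (auto simp: mv_def a_def b_def c_def d_def e_def f_def g_def)
  have ne: "mv \<noteq> []" using assms by (simp add: mv_def a_def)
  have ab: "e1 \<le> int k" "e2 \<le> int k" "- int k \<le> e1" "- int k \<le> e2" using assms by auto
  have l: "int (length mv) = 8 * int k - e1 - e2" using assms ab
    by (simp add: mv_def a_def b_def c_def d_def e_def f_def g_def of_nat_diff)
  have p: "pos mv = (e1, e2)" using assms ab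
    by (simp add: mv_def a_def b_def c_def d_def e_def f_def g_def of_nat_diff)
  have v1: "(- int k, - int k) \<in> verts mv"
  proof -
    have "pos (a @ b) \<in> verts ((a @ b) @ (c @ d @ e @ f @ g))" by (rule verts_pre)
    then show ?thesis by (simp add: mv_def a_def b_def)
  qed
  have v2: "(int k, int k) \<in> verts mv"
  proof -
    have "pos (a @ b @ c @ d @ e) \<in> verts ((a @ b @ c @ d @ e) @ (f @ g))" by (rule verts_pre)
    then show ?thesis using assms by (simp add: mv_def a_def b_def c_def d_def e_def of_nat_diff)
  qed
  have v3: "(int N, r) \<in> verts mv" if r: "- int k \<le> r" "r \<le> int k" for r
  proof -
    have "pos (replicate (nat (r + int k)) sp) \<in> verts d"
      unfolding d_def by (rule rep_vert) (use r in linarith)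
    then have "pos (a @ b @ c) + pos (replicate (nat (r + int k)) sp) \<in> verts ((a @ b @ c) @ d @ (e @ f @ g))"
      by (rule verts_mid)
    then show ?thesis using r by (simp add: mv_def a_def b_def c_def)
  qed
  have "length mv \<le> 8 * k" using l assms by linarith
  then show ?thesis using s ne p v1 v2 v3 by blast
qed

lemma pathB:
  fixes k N :: nat and e1 e2 :: int
  assumes "N \<le> k" "k \<ge> 1" "\<bar>e1\<bar> \<le> int k" "\<bar>e2\<bar> \<le> int k" "e1 + e2 < 0"
  shows "\<exists>mv. set mv \<subseteq> {tp, tm, sp, sm} \<and> mv \<noteq> [] \<and> length mv \<le> 8 * k \<and> pos mv = (e1, e2) \<and>
    (int k, int k) \<in> verts mv \<and> (- int k, - int k) \<in> verts mv \<and>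
    (\<forall>r. - int k \<le> r \<and> r \<le> int k \<longrightarrow> (int N, r) \<in> verts mv)"
proof -
  define a where "a = replicate k tp"
  define b where "b = replicate k sp"
  define c where "c = replicate (k - N) tm"
  define d where "d = replicate (2 * k) sm"
  define e where "e = replicate (N + k) tm"
  define f where "f = replicate (nat (e1 + int k)) tp"
  define g where "g = replicate (nat (e2 + int k)) sp"
  define mv where "mv = a @ b @ c @ d @ e @ f @ g"
  have s: "set mv \<subseteq> {tp, tm, sp, sm}" by (auto simp: mv_def a_def b_def c_def d_def e_def f_def g_def)
  have ne: "mv \<noteq> []" using assms by (simp add: mv_def a_def)
  have ab: "e1 \<le> int k" "e2 \<le> int k" "- int k \<le> e1" "- int k \<le> e2" using assms by auto
  have l: "int (length mv) = 8 * int k + e1 + e2" using assms ab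
    by (simp add: mv_def a_def b_def c_def d_def e_def f_def g_def of_nat_diff)
  have p: "pos mv = (e1, e2)" using assms ab
    by (simp add: mv_def a_def b_def c_def d_def e_def f_def g_def of_nat_diff)
  have v1: "(int k, int k) \<in> verts mv"
  proof -
    have "pos (a @ b) \<in> verts ((a @ b) @ (c @ d @ e @ f @ g))" by (rule verts_pre)
    then show ?thesis by (simp add: mv_def a_def b_def)
  qed
  have v2: "(- int k, - int k) \<in> verts mv"
  proof -
    have "pos (a @ b @ c @ d @ e) \<in> verts ((a @ b @ c @ d @ e) @ (f @ g))" by (rule verts_pre)
    then show ?thesis using assms by (simp add: mv_def a_def b_def c_def d_def e_def of_nat_diff)
  qed
  have v3: "(int N, r) \<in> verts mv" if r: "- int k \<le> r" "r \<le> int k" for r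
  proof -
    have "pos (replicate (nat (int k - r)) sm) \<in> verts d"
      unfolding d_def by (rule rep_vert) (use r in linarith)
    then have "pos (a @ b @ c) + pos (replicate (nat (int k - r)) sm) \<in> verts ((a @ b @ c) @ d @ (e @ f @ g))"
      by (rule verts_mid)
    then show ?thesis using r assms by (simp add: mv_def a_def b_def c_def of_nat_diff)
  qed
  have "length mv \<le> 8 * k" using l assms by linarith
  then show ?thesis using s ne p v1 v2 v3 by blast
qed

lemma pathG:
  fixes k :: nat
  assumes "k \<ge> 1"
  shows "\<exists>mv. set mv \<subseteq> {tp, tm, sp, sm} \<and> mv \<noteq> [] \<and> length mv = 8 * k \<and> pos mv = 0 \<and>
    (int k, int k) \<in> verts mv \<and> (- int k, - int k) \<in> verts mv"
proof -
  define a where "a = replicate k tp"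
  define b where "b = replicate k sp"
  define c where "c = replicate (2 * k) tm"
  define d where "d = replicate (2 * k) sm"
  define e where "e = replicate k tp"
  define f where "f = replicate k sp"
  define mv where "mv = a @ b @ c @ d @ e @ f"
  have s: "set mv \<subseteq> {tp, tm, sp, sm}" by (auto simp: mv_def a_def b_def c_def d_def e_def f_def)
  have ne: "mv \<noteq> []" using assms by (simp add: mv_def a_def)
  have l: "length mv = 8 * k" by (simp add: mv_def a_def b_def c_def d_def e_def f_def)
  have p: "pos mv = 0" by (simp add: mv_def a_def b_def c_def d_def e_def f_def zero_prod_def del: zero_pair)
  have v1: "(int k, int k) \<in> verts mv"
  proof -
    have "pos (a @ b) \<in> verts ((a @ b) @ (c @ d @ e @ f))" by (rule verts_pre)
    then show ?thesis by (simp add: mv_def a_def b_def)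
  qed
  have v2: "(- int k, - int k) \<in> verts mv"
  proof -
    have "pos (a @ b @ c @ d) \<in> verts ((a @ b @ c @ d) @ (e @ f))" by (rule verts_pre)
    then show ?thesis by (simp add: mv_def a_def b_def c_def d_def)
  qed
  show ?thesis using s ne l p v1 v2 by blast
qed




lemma single_in: "[x] \<in> A_sym"
proof -
  obtain g b where x: "x = (g, b)" by (cases x)
  show ?thesis by (cases g; cases b) (auto simp: x A_sym_def A_set_def winv_def flip_def)
qed

lemma rep_exists: "\<exists>ws. set ws \<subseteq> A_sym \<and> concat ws = w"
  by (intro exI[of _ "map (\<lambda>x. [x]) w"]) (auto simp: single_in)

lemma dA_set_ne: "{length ws | ws. set ws \<subseteq> A_sym \<and> G_eq (concat ws) (winv g @ h)} \<noteq> {}"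
proof -
  obtain ws where "set ws \<subseteq> A_sym" "concat ws = winv g @ h" using rep_exists by blast
  then show ?thesis using G_eq.G_refl by auto
qed

lemma dA_attained: "\<exists>ws. set ws \<subseteq> A_sym \<and> G_eq (concat ws) (winv g @ h) \<and> length ws = dA g h"
  using Inf_nat_def1[OF dA_set_ne[of g h]] unfolding dA_def by auto

lemma dA_le: "set ws \<subseteq> A_sym \<Longrightarrow> G_eq (concat ws) (winv g @ h) \<Longrightarrow> dA g h \<le> length ws"
  unfolding dA_def by (rule cInf_lower) (auto intro: bdd_belowI[of _ 0])

lemma dA_ge: "(\<And>ws. set ws \<subseteq> A_sym \<Longrightarrow> G_eq (concat ws) (winv g @ h) \<Longrightarrow> n \<le> length ws) \<Longrightarrow> n \<le> dA g h"
  unfolding dA_def by (rule cInf_greatest[OF dA_set_ne]) auto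

lemma nt_take: "nt (take i u) \<le> nt u" "ns (take i u) \<le> ns u"
  using nt_simps(2)[of "take i u" "drop i u"] ns_simps(2)[of "take i u" "drop i u"] by simp_all

theorem main:
  shows "\<forall>N::nat. N \<ge> 1 \<longrightarrow> (\<exists>g::word. depthA g \<ge> N)"
proof (intro allI impI)
  fix N :: nat assume N1: "N \<ge> 1"
  define k where "k = 3 * N"
  have k1: "k \<ge> 1" "N \<le> k" using N1 by (simp_all add: k_def)
  define T0 where "T0 = {(int k, int k), (- int k, - int k)}"
  obtain mv0 where mv0: "set mv0 \<subseteq> {tp, tm, sp, sm}" "mv0 \<noteq> []" "length mv0 = 8 * k" "pos mv0 = 0"
    "(int k, int k) \<in> verts mv0" "(- int k, - int k) \<in> verts mv0"
    using pathG[OF k1(1)] by blast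
  obtain ws0 where ws0: "set ws0 \<subseteq> A_sym" "length ws0 = length mv0" "st (concat ws0) = (pos mv0, T0)"
  proof -
    have ok0: "\<forall>x\<in>set mv0. fst x \<noteq> Ga" using mv0(1) by auto
    have "T0 \<subseteq> verts mv0" using mv0 by (auto simp: T0_def)
    then show ?thesis using walk[OF ok0] mv0(2) that by blast
  qed
  define g where "g = concat ws0"
  have stg: "st g = (0, T0)" using ws0 mv0 by (simp add: g_def)
  have ng_le: "normA g \<le> 8 * k"
    using dA_le[OF ws0(1), of "[]" g] G_eq.G_refl[of g] ws0(2) mv0(3) by (simp add: normA_def g_def)
  have ng_ge: "8 * k \<le> normA g"
    unfolding normA_def
  proof (rule dA_ge)
    fix ws assume "set ws \<subseteq> A_sym" "G_eq (concat ws) (winv [] @ g)"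
    then show "8 * k \<le> length ws" using lower[OF k1(1), of ws g] stg by (simp add: T0_def)
  qed
  have ng: "normA g = 8 * k" using ng_le ng_ge by simp
  define h0 where "h0 = replicate (8 * k + 1) tp"
  have nh0: "8 * k + 1 \<le> normA h0"
    unfolding normA_def
  proof (rule dA_ge)
    fix ws assume ws: "set ws \<subseteq> A_sym" "G_eq (concat ws) (winv [] @ h0)"
    have "pos (concat ws) = pos h0" using G_eq_inv[of "concat ws" h0 "\<lambda>_. False"] ws(2) by simp
    then have "fst (pos (concat ws)) = int (8 * k + 1)" by (simp add: h0_def)
    then have "int (8 * k + 1) \<le> int (nt (concat ws))" using nt_bound[of "concat ws"] by simp
    then show "8 * k + 1 \<le> length ws" using concat_small[OF ws(1)] by linarith
  qed
  have "normA g < normA h0" using nh0 ng by simp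
  then have ne: "{dA g h | h. normA g < normA h} \<noteq> {}" by blast
  have key: "N \<le> dA g h" if hh: "normA g < normA h" for h
  proof (rule ccontr)
    assume "\<not> N \<le> dA g h"
    then have lt: "dA g h < N" by simp
    obtain w where w: "set w \<subseteq> A_sym" "G_eq (concat w) (winv g @ h)" "length w = dA g h"
      using dA_attained by blast
    define u where "u = concat w"
    have vh: "val h = val g + val u"
    proof -
      have "val u = - val g + val h" using w(2) by (simp add: u_def val_eq_iff[symmetric] val_append val_winv)
      then show ?thesis by (simp add: add.assoc[symmetric])
    qed
    have small: "nt u + ns u \<le> N - 1" using concat_small[OF w(1)] w(3) lt by (simp add: u_def)
    define S where "S = snd (st u)"
    define e where "e = pos u"
    have finS: "finite S" by (simp add: S_def finite_st)
    have Sb: "\<bar>fst p\<bar> + \<bar>snd p\<bar> \<le> int N - 1" if "p \<in> S" for p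
    proof -
      obtain i where i: "pos (take i u) = p" using st_toggles[of p u] \<open>p \<in> S\<close> unfolding S_def by blast
      have "\<bar>fst p\<bar> \<le> int (nt u)" using nt_bound[of "take i u"] nt_take[of i u] i by simp
      moreover have "\<bar>snd p\<bar> \<le> int (ns u)" using ns_bound[of "take i u"] nt_take[of i u] i by simp
      ultimately show ?thesis using small N1 by linarith
    qed
    have eb: "\<bar>fst e\<bar> + \<bar>snd e\<bar> \<le> int N - 1"
      using nt_bound[of u] ns_bound[of u] small N1 by (simp add: e_def)
    obtain D where D: "finite D" "D \<subseteq> {(int N, r) | r. - 3 * int N \<le> r \<and> r \<le> int N}" "AS S = AS D"
    proof -
      have "\<forall>p\<in>S. fst p \<le> int N \<and> - 3 * int N \<le> snd p - (int N - fst p) \<and> snd p \<le> int N"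
        using Sb by fastforce
      then show ?thesis using push_set[OF finS] that by blast
    qed
    have disj: "T0 \<inter> D = {}" using D(2) N1 by (auto simp: T0_def k_def)
    have finT: "finite T0" by (simp add: T0_def)
    have vg: "val g = AS T0" using normal_form[of g] stg fst_st[of g] by simp
    have vu: "val u = AS D + P e" using normal_form[of u] D(3) by (simp add: S_def e_def)
    have sdU: "sd T0 D = T0 \<union> D" using disj by (auto simp: sd_def)
    have vh2: "val h = AS (T0 \<union> D) + P e"
      using vh vg vu AS_sd[OF D(1) finT] sdU by (simp add: add.assoc[symmetric])
    obtain e1 e2 where e: "e = (e1, e2)" by (cases e)
    have ebs: "\<bar>e1\<bar> \<le> int k" "\<bar>e2\<bar> \<le> int k" using eb e by (auto simp: k_def)
    obtain mv where mv: "set mv \<subseteq> {tp, tm, sp, sm}" "mv \<noteq> []" "length mv \<le> 8 * k" "pos mv = (e1, e2)"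
      "(int k, int k) \<in> verts mv" "(- int k, - int k) \<in> verts mv"
      "\<forall>r. - int k \<le> r \<and> r \<le> int k \<longrightarrow> (int N, r) \<in> verts mv"
    proof (cases "e1 + e2 \<ge> 0")
      case True then show ?thesis using pathA[OF k1(2) k1(1) ebs True] that by blast
    next
      case False then show ?thesis using pathB[OF k1(2) k1(1) ebs] that by force
    qed
    have Tsub: "T0 \<union> D \<subseteq> verts mv"
    proof
      fix p assume "p \<in> T0 \<union> D"
      then show "p \<in> verts mv"
      proof
        assume "p \<in> T0" then show ?thesis using mv(5,6) by (auto simp: T0_def)
      next
        assume "p \<in> D"
        then obtain r where "p = (int N, r)" "- 3 * int N \<le> r" "r \<le> int N" using D(2) by auto
        then show ?thesis using mv(7) k_def by auto
      qed
    qed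
    obtain ws where ws: "set ws \<subseteq> A_sym" "length ws = length mv" "st (concat ws) = (pos mv, T0 \<union> D)"
    proof -
      have ok: "\<forall>x\<in>set mv. fst x \<noteq> Ga" using mv(1) by auto
      show ?thesis using walk[OF ok Tsub] mv(2) that by blast
    qed
    have "val (concat ws) = AS (T0 \<union> D) + P e"
      using normal_form[of "concat ws"] ws(3) fst_st[of "concat ws"] mv(4) e by simp
    then have "G_eq (concat ws) (winv [] @ h)" using vh2 by (simp add: val_eq_iff[symmetric])
    then have "normA h \<le> length ws" using dA_le[OF ws(1)] by (simp add: normA_def)
    then show False using hh ng ws(2) mv(3) by simp
  qed
  have "N \<le> depthA g" unfolding depthA_def
    by (rule cInf_greatest[OF ne]) (auto intro: key)
  then show "\<exists>g::word. depthA g \<ge> N" by blast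
qed


theorem theorem1p1:
  shows "\<forall>N::nat. N \<ge> 1 \<longrightarrow> (\<exists>g::word. depthA g \<ge> N)"
  by (rule main)

end
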